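(* Let $\gamma(s)$ be a non-geodesic arc-length parametrized Frenet curve with Frenet frame $\{T,N,B\}$, constant curvature $k_1>0$ and zero torsion $k_2=0$ in a $3$-dimensional $f$-Kenmotsu manifold $(M,\varphi,\xi,\eta,g)$, and suppose $\eta(B)=0$. Then $\gamma$ is a proper triharmonic curve if and only if $$k_1=\sqrt{2\Big(\frac r2+2(f^2+f')-\big(\frac r2+3(f^2+f')\big)(\eta(T)^2+\eta(N)^2)\Big)}.$$
   Context: An almost contact metric manifold $(M^{2n+1},\varphi,\xi,\eta,g)$ has $\varphi^2=-I+\eta\otimes\xi$, $\eta(\xi)=1$, $\varphi\xi=0$, $\eta\circ\varphi=0$, $\eta(X)=g(X,\xi)$, $g(\varphi X,\varphi Y)=g(X,Y)-\eta(X)\eta(Y)$. It is $f$-Kenmotsu if $(\nabla_X\varphi)Y=f(g(\varphi X,Y)\xi-\eta(Y)\varphi X)$ and $\nabla_X\xi=f(X-\eta(X)\xi)$ for smooth $f$ with $df\wedge\eta=0$. In dimension 3 the curvature is $R(X,Y)Z=(\frac r2+2(f^2+f'))(g(Y,Z)X-g(X,Z)Y)-(\frac r2+3(f^2+f'))(g(Y,Z)\eta(X)\xi-g(X,Z)\eta(Y)\xi-\eta(X)\eta(Z)Y+\eta(Y)\eta(Z)X)$, with $r$ the scalar curvature and $f'$ the derivative of $f$ (regarded along the curve). Frenet equations: $\nabla_TT=k_1N$, $\nabla_TN=-k_1T+k_2B$, $\nabla_TB=-k_2N$. A curve is triharmonic if $\tau_3(\gamma)=\nabla_T^5T+R(\nabla_T^3T,T)T-R(\nabla_T^2T,\nabla_TT)T=0$,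 and proper triharmonic if triharmonic but not a geodesic. *)

theory Defs
  imports "HOL-Analysis.Analysis"
begin

(* Model: everything is expressed along the curve.  Vector fields along gamma are
   written in a parallel orthonormal frame, so they are maps  real => real^3,
   the metric g is the Euclidean inner product, and the covariant derivative
   nabla_T along gamma is the ordinary derivative. *)

type_synonym vec3 = "real^3"

fun cov_iter :: "nat \<Rightarrow> (real \<Rightarrow> vec3) \<Rightarrow> real \<Rightarrow> vec3" where
  "cov_iter 0 V = V"
| "cov_iter (Suc n) V = (\<lambda>s. vector_derivative (cov_iter n V) (at s))"

text \<open>Curvature tensor of a 3-dimensional f-Kenmotsu manifold at gamma(s),
  as given in the context (r = scalar curvature, fd = f').\<close>
definition fK3_R ::
  "(real \<Rightarrow> real) \<Rightarrow> (real \<Rightarrow> real) \<Rightarrow> (real \<Rightarrow> real) \<Rightarrow> (real \<Rightarrow> vec3)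
   \<Rightarrow> real \<Rightarrow> vec3 \<Rightarrow> vec3 \<Rightarrow> vec3 \<Rightarrow> vec3" where
  "fK3_R r f fd xi s X Y Z =
     (r s / 2 + 2 * ((f s)\<^sup>2 + fd s)) *\<^sub>R ((Y \<bullet> Z) *\<^sub>R X - (X \<bullet> Z) *\<^sub>R Y)
   - (r s / 2 + 3 * ((f s)\<^sup>2 + fd s)) *\<^sub>R
       (((Y \<bullet> Z) * (xi s \<bullet> X)) *\<^sub>R xi s - ((X \<bullet> Z) * (xi s \<bullet> Y)) *\<^sub>R xi s
        - ((xi s \<bullet> X) * (xi s \<bullet> Z)) *\<^sub>R Y + ((xi s \<bullet> Y) * (xi s \<bullet> Z)) *\<^sub>R X)"

definition fKenmotsu_along ::
  "real set \<Rightarrow> (real \<Rightarrow> vec3 \<Rightarrow> vec3) \<Rightarrow> (real \<Rightarrow> vec3) \<Rightarrow> (real \<Rightarrow> real)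
   \<Rightarrow> (real \<Rightarrow> real) \<Rightarrow> (real \<Rightarrow> vec3) \<Rightarrow> bool" where
  "fKenmotsu_along I phi xi f fd T \<longleftrightarrow>
     (\<forall>s\<in>I.
        linear (phi s)
      \<and> xi s \<bullet> xi s = 1
      \<and> phi s (xi s) = 0
      \<and> (\<forall>X. phi s (phi s X) = - X + (xi s \<bullet> X) *\<^sub>R xi s)
      \<and> (\<forall>X. xi s \<bullet> phi s X = 0)
      \<and> (\<forall>X Y. phi s X \<bullet> phi s Y = X \<bullet> Y - (xi s \<bullet> X) * (xi s \<bullet> Y))
      \<and> (xi has_vector_derivative (f s *\<^sub>R (T s - (xi s \<bullet> T s) *\<^sub>R xi s))) (at s)
      \<and> (\<forall>Y. ((\<lambda>t. phi t Y) has_vector_derivative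
               (f s *\<^sub>R ((phi s (T s) \<bullet> Y) *\<^sub>R xi s - (xi s \<bullet> Y) *\<^sub>R phi s (T s)))) (at s))
      \<and> (f has_real_derivative fd s) (at s))"

definition frenet3 ::
  "real set \<Rightarrow> (real \<Rightarrow> vec3) \<Rightarrow> (real \<Rightarrow> vec3) \<Rightarrow> (real \<Rightarrow> vec3)
   \<Rightarrow> (real \<Rightarrow> real) \<Rightarrow> (real \<Rightarrow> real) \<Rightarrow> bool" where
  "frenet3 I T N B k1 k2 \<longleftrightarrow>
     (\<forall>s\<in>I.
        T s \<bullet> T s = 1 \<and> N s \<bullet> N s = 1 \<and> B s \<bullet> B s = 1
      \<and> T s \<bullet> N s = 0 \<and> T s \<bullet> B s = 0 \<and> N s \<bullet> B s = 0
      \<and> (T has_vector_derivative (k1 s *\<^sub>R N s)) (at s)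
      \<and> (N has_vector_derivative (- k1 s *\<^sub>R T s + k2 s *\<^sub>R B s)) (at s)
      \<and> (B has_vector_derivative (- k2 s *\<^sub>R N s)) (at s))"

definition geodesic_along :: "real set \<Rightarrow> (real \<Rightarrow> vec3) \<Rightarrow> bool" where
  "geodesic_along I T \<longleftrightarrow> (\<forall>s\<in>I. cov_iter 1 T s = 0)"

definition triharmonic ::
  "real set \<Rightarrow> (real \<Rightarrow> vec3 \<Rightarrow> vec3 \<Rightarrow> vec3 \<Rightarrow> vec3) \<Rightarrow> (real \<Rightarrow> vec3) \<Rightarrow> bool" where
  "triharmonic I R T \<longleftrightarrow>
     (\<forall>s\<in>I. cov_iter 5 T s + R s (cov_iter 3 T s) (T s) (T s)
                 - R s (cov_iter 2 T s) (cov_iter 1 T s) (T s) = 0)"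

definition proper_triharmonic ::
  "real set \<Rightarrow> (real \<Rightarrow> vec3 \<Rightarrow> vec3 \<Rightarrow> vec3 \<Rightarrow> vec3) \<Rightarrow> (real \<Rightarrow> vec3) \<Rightarrow> bool" where
  "proper_triharmonic I R T \<longleftrightarrow> triharmonic I R T \<and> \<not> geodesic_along I T"

end

theory Submission imports Defs begin

lemma orth3_zero:
  fixes T N B w :: "real^3"
  assumes "T \<bullet> T = 1" "N \<bullet> N = 1" "B \<bullet> B = 1" "T \<bullet> N = 0" "T \<bullet> B = 0" "N \<bullet> B = 0"
    "w \<bullet> T = 0" "w \<bullet> N = 0" "w \<bullet> B = 0"
  shows "w = 0"
proof (rule ccontr)
  assume w: "w \<noteq> 0"
  let ?S = "{T, N, B, w}"
  have d: "T \<noteq> N" "T \<noteq> B" "N \<noteq> B" "w \<noteq> T" "w \<noteq> N" "w \<noteq> B"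
    using assms w by (auto simp: inner_commute)
  have "pairwise orthogonal ?S"
    using assms by (auto simp: pairwise_def orthogonal_def inner_commute)
  moreover have "0 \<notin> ?S" using assms w by auto
  ultimately have "independent ?S" by (rule pairwise_orthogonal_independent)
  hence "card ?S \<le> DIM(real^3)" using independent_bound by blast
  moreover have "card ?S = 4" using d by auto
  ultimately show False by simp
qed

lemma vd_open:
  fixes F G :: "real \<Rightarrow> real^3"
  assumes "open I" "s \<in> I" "\<forall>t\<in>I. F t = G t" "(G has_vector_derivative D) (at s)"
  shows "vector_derivative F (at s) = D"
proof -
  have "(F has_vector_derivative D) (at s)"
    by (rule has_vector_derivative_transform_within_open[OF assms(4) assms(1) assms(2)]) (use assms(3) in auto)
  thus ?thesis by (rule vector_derivative_at)
qed

lemma vd_cmul: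
  fixes g :: "real \<Rightarrow> real^3"
  assumes "(g has_vector_derivative g') (at x)"
  shows "((\<lambda>t. c *\<^sub>R g t) has_vector_derivative c *\<^sub>R g') (at x)"
  using has_vector_derivative_scaleR[OF DERIV_const assms] by simp

lemma Rcalc:
  fixes T N :: "real^3" and x y a b k1 :: real
  assumes o: "T \<bullet> T = 1" "N \<bullet> N = 1" "T \<bullet> N = 0"
  defines "X \<equiv> x *\<^sub>R T + y *\<^sub>R N"
  defines "R \<equiv> (\<lambda>U V W. a *\<^sub>R ((V \<bullet> W) *\<^sub>R U - (U \<bullet> W) *\<^sub>R V) - b *\<^sub>R (((V \<bullet> W) * (X \<bullet> U)) *\<^sub>R X - ((U \<bullet> W) * (X \<bullet> V)) *\<^sub>R X - ((X \<bullet> U) * (X \<bullet> W)) *\<^sub>R V + ((X \<bullet> V) * (X \<bullet> W)) *\<^sub>R U))"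
  shows "k1^5 *\<^sub>R N + R (-(k1^3) *\<^sub>R N) T T - R (-(k1^2) *\<^sub>R T) (k1 *\<^sub>R N) T = (k1^3*(k1^2 - 2*(a - b*(x\<^sup>2+y\<^sup>2)))) *\<^sub>R N"
proof -
  have NT: "N \<bullet> T = 0" using o by (simp add: inner_commute)
  have i: "X \<bullet> T = x" "X \<bullet> N = y" unfolding X_def using o NT by (simp_all add: inner_add_left)
  show ?thesis
    unfolding R_def using o NT i
    apply (simp add: inner_add_left)
    unfolding X_def
    apply (simp add: vec_eq_iff algebra_simps power2_eq_square eval_nat_numeral)
    done
qed

theorem theorem4:
  fixes I :: "real set"
    and T N B xi :: "real \<Rightarrow> real^3"
    and phi :: "real \<Rightarrow> real^3 \<Rightarrow> real^3"
    and f fd r :: "real \<Rightarrow> real"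
    and k1 :: real
  assumes "open I" and "is_interval I" and "I \<noteq> {}"
    and "fKenmotsu_along I phi xi f fd T"
    and "frenet3 I T N B (\<lambda>_. k1) (\<lambda>_. 0)"
    and "k1 > 0"
    and "\<forall>s\<in>I. xi s \<bullet> B s = 0"
  shows "proper_triharmonic I (fK3_R r f fd xi) T \<longleftrightarrow>
    (\<forall>s\<in>I. k1 = sqrt (2 * (r s / 2 + 2 * ((f s)\<^sup>2 + fd s)
        - (r s / 2 + 3 * ((f s)\<^sup>2 + fd s)) * ((xi s \<bullet> T s)\<^sup>2 + (xi s \<bullet> N s)\<^sup>2))))"
proof -
  note fr = assms(5)[unfolded frenet3_def]
  have dT: "\<And>s. s \<in> I \<Longrightarrow> (T has_vector_derivative (k1 *\<^sub>R N s)) (at s)" using fr by auto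
  have dN: "\<And>s. s \<in> I \<Longrightarrow> (N has_vector_derivative (- k1 *\<^sub>R T s)) (at s)" using fr by auto
  have c1: "\<forall>s\<in>I. cov_iter 1 T s = k1 *\<^sub>R N s"
    using vd_open[OF assms(1) _ _ dT] by simp
  have c2: "\<forall>s\<in>I. cov_iter 2 T s = (-(k1^2)) *\<^sub>R T s"
  proof
    fix s assume s: "s \<in> I"
    have "((\<lambda>t. k1 *\<^sub>R N t) has_vector_derivative k1 *\<^sub>R (- k1 *\<^sub>R T s)) (at s)"
      by (rule vd_cmul[OF dN[OF s]])
    from vd_open[OF assms(1) s _ this] c1 show "cov_iter 2 T s = (-(k1^2)) *\<^sub>R T s"
      by (simp add: numeral_2_eq_2 power2_eq_square)
  qed
  have c3: "\<forall>s\<in>I. cov_iter 3 T s = (-(k1^3)) *\<^sub>R N s"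
  proof
    fix s assume s: "s \<in> I"
    have "((\<lambda>t. (-(k1^2)) *\<^sub>R T t) has_vector_derivative (-(k1^2)) *\<^sub>R (k1 *\<^sub>R N s)) (at s)"
      by (rule vd_cmul[OF dT[OF s]])
    from vd_open[OF assms(1) s _ this] c2 show "cov_iter 3 T s = (-(k1^3)) *\<^sub>R N s"
      by (simp add: numeral_3_eq_3 numeral_2_eq_2 power2_eq_square power3_eq_cube)
  qed
  have c4: "\<forall>s\<in>I. cov_iter 4 T s = (k1^4) *\<^sub>R T s"
  proof
    fix s assume s: "s \<in> I"
    have "((\<lambda>t. (-(k1^3)) *\<^sub>R N t) has_vector_derivative (-(k1^3)) *\<^sub>R (- k1 *\<^sub>R T s)) (at s)"
      by (rule vd_cmul[OF dN[OF s]])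
    from vd_open[OF assms(1) s _ this] c3 show "cov_iter 4 T s = (k1^4) *\<^sub>R T s"
      by (simp add: eval_nat_numeral)
  qed
  have c5: "\<forall>s\<in>I. cov_iter 5 T s = (k1^5) *\<^sub>R N s"
  proof
    fix s assume s: "s \<in> I"
    have "((\<lambda>t. (k1^4) *\<^sub>R T t) has_vector_derivative (k1^4) *\<^sub>R (k1 *\<^sub>R N s)) (at s)"
      by (rule vd_cmul[OF dT[OF s]])
    from vd_open[OF assms(1) s _ this] c4 show "cov_iter 5 T s = (k1^5) *\<^sub>R N s"
      by (simp add: eval_nat_numeral)
  qed
  define a where "a s = r s / 2 + 2 * ((f s)\<^sup>2 + fd s)" for s
  define b where "b s = r s / 2 + 3 * ((f s)\<^sup>2 + fd s)" for s
  define q where "q s = a s - b s * ((xi s \<bullet> T s)\<^sup>2 + (xi s \<bullet> N s)\<^sup>2)" for s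
  have tau: "cov_iter 5 T s + fK3_R r f fd xi s (cov_iter 3 T s) (T s) (T s)
                 - fK3_R r f fd xi s (cov_iter 2 T s) (cov_iter 1 T s) (T s)
             = (k1^3 * (k1^2 - 2 * q s)) *\<^sub>R N s" if s: "s \<in> I" for s
  proof -
    have o: "T s \<bullet> T s = 1" "N s \<bullet> N s = 1" "B s \<bullet> B s = 1" "T s \<bullet> N s = 0" "T s \<bullet> B s = 0" "N s \<bullet> B s = 0"
      using fr s by auto
    let ?w = "xi s - (xi s \<bullet> T s) *\<^sub>R T s - (xi s \<bullet> N s) *\<^sub>R N s"
    have NT: "N s \<bullet> T s = 0" using o by (simp add: inner_commute)
    have "?w = 0"
      apply (rule orth3_zero[OF o])
      using o NT assms(7) s by (simp_all add: inner_diff_left)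
    define x where "x = xi s \<bullet> T s"
    define y where "y = xi s \<bullet> N s"
    have xiexp: "xi s = x *\<^sub>R T s + y *\<^sub>R N s"
      using \<open>?w = 0\<close> unfolding x_def y_def by (simp add: algebra_simps)
    have "q s = a s - b s * (x\<^sup>2 + y\<^sup>2)" unfolding q_def x_def y_def ..
    moreover have "fK3_R r f fd xi s = (\<lambda>U V W. a s *\<^sub>R ((V \<bullet> W) *\<^sub>R U - (U \<bullet> W) *\<^sub>R V) - b s *\<^sub>R (((V \<bullet> W) * (xi s \<bullet> U)) *\<^sub>R xi s - ((U \<bullet> W) * (xi s \<bullet> V)) *\<^sub>R xi s - ((xi s \<bullet> U) * (xi s \<bullet> W)) *\<^sub>R V + ((xi s \<bullet> V) * (xi s \<bullet> W)) *\<^sub>R U))"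
      by (simp add: fK3_R_def a_def b_def fun_eq_iff)
    ultimately show ?thesis
      using c1 c2 c3 c5 s Rcalc[where T="T s" and N="N s" and x=x and y=y and a="a s" and b="b s"] o
      unfolding xiexp by simp
  qed
  have ng: "\<not> geodesic_along I T"
  proof
    assume g: "geodesic_along I T"
    obtain s0 where s0: "s0 \<in> I" using assms(3) by auto
    have "k1 *\<^sub>R N s0 = 0" using g c1 s0 unfolding geodesic_along_def by auto
    moreover have "N s0 \<noteq> 0" using fr s0 by auto
    ultimately show False using assms(6) by simp
  qed
  have pt: "(cov_iter 5 T s + fK3_R r f fd xi s (cov_iter 3 T s) (T s) (T s)
                 - fK3_R r f fd xi s (cov_iter 2 T s) (cov_iter 1 T s) (T s) = 0)
        \<longleftrightarrow> k1 = sqrt (2 * q s)" if s: "s \<in> I" for s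
  proof -
    have Nn: "N s \<noteq> 0" using fr s by auto
    have "(cov_iter 5 T s + fK3_R r f fd xi s (cov_iter 3 T s) (T s) (T s)
                 - fK3_R r f fd xi s (cov_iter 2 T s) (cov_iter 1 T s) (T s) = 0)
         \<longleftrightarrow> k1^2 = 2 * q s"
      unfolding tau[OF s] using Nn assms(6) by simp
    also have "\<dots> \<longleftrightarrow> k1 = sqrt (2 * q s)"
    proof
      assume h2: "k1^2 = 2 * q s"
      have "sqrt (k1^2) = k1" using assms(6) by simp
      thus "k1 = sqrt (2 * q s)" using h2 by simp
    next
      assume h: "k1 = sqrt (2 * q s)"
      have "2 * q s \<ge> 0"
      proof (rule ccontr)
        assume "\<not> 2 * q s \<ge> 0"
        hence "sqrt (2 * q s) < 0" by simp
        thus False using h assms(6) by simp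
      qed
      thus "k1^2 = 2 * q s" using h by simp
    qed
    finally show ?thesis .
  qed
  have allq: "(\<forall>s\<in>I. cov_iter 5 T s + fK3_R r f fd xi s (cov_iter 3 T s) (T s) (T s)
                 - fK3_R r f fd xi s (cov_iter 2 T s) (cov_iter 1 T s) (T s) = 0)
     \<longleftrightarrow> (\<forall>s\<in>I. k1 = sqrt (2 * q s))"
    using pt by blast
  have qe: "\<And>s. q s = r s / 2 + 2 * ((f s)\<^sup>2 + fd s)
        - (r s / 2 + 3 * ((f s)\<^sup>2 + fd s)) * ((xi s \<bullet> T s)\<^sup>2 + (xi s \<bullet> N s)\<^sup>2)"
    unfolding q_def a_def b_def ..
  show ?thesis
    unfolding proper_triharmonic_def triharmonic_def allq qe[symmetric] using ng by blast
qed

end
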